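(* Let $G$ be a non decreasing function on $[0,\infty)$ and let $X$ be a real random variable with symmetric law. Let $(X_n)_{n\ge1}$ be i.i.d. copies of $X$, $S_n:=X_1+\cdots+X_n$, $L_1:=\sup\big(\{0\}\cup\{n\ge1:\ |S_n/n|\ge1\}\big)$ and $S(X,G,1/8):=\sum_{n\ge1}n^{-1}G(n)\,P[|S_n/n|\ge 1/8]$. Then $$E[G(L_1)]\le G(0)+12\,S(X,G,1/8).$$
   Context: A random variable $X$ has symmetric law if $X$ and $-X$ have the same law. *)

theory Defs
  imports "HOL-Probability.Probability"
begin

definition psum :: "(nat \<Rightarrow> 'a \<Rightarrow> real) \<Rightarrow> nat \<Rightarrow> 'a \<Rightarrow> real" where
  "psum Xs n \<omega> = (\<Sum>i\<in>{1..n}. Xs i \<omega>)"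

definition last_exit :: "(nat \<Rightarrow> 'a \<Rightarrow> real) \<Rightarrow> 'a \<Rightarrow> enat" where
  "last_exit Xs \<omega> = Sup ({0} \<union> {enat n | n. n \<ge> 1 \<and> \<bar>psum Xs n \<omega> / real n\<bar> \<ge> 1})"

text \<open>Extension of G to nat \<union> {\<infinity>}: G(\<infinity>) = sup of G (= limit, G being monotone).\<close>
definition G_ext :: "(real \<Rightarrow> ennreal) \<Rightarrow> enat \<Rightarrow> ennreal" where
  "G_ext G k = (case k of enat n \<Rightarrow> G (real n) | \<infinity> \<Rightarrow> (SUP n. G (real n)))"

end

theory Submission
  imports Defs
begin

locale symm = prob_space M for M :: "'a measure" +
  fixes X :: "'a \<Rightarrow> real" and Xs :: "nat \<Rightarrow> 'a \<Rightarrow> real"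
  assumes X_meas[measurable]: "X \<in> borel_measurable M"
  and symmX: "distr M borel (\<lambda>\<omega>. - X \<omega>) = distr M borel X"
  and indep: "indep_vars (\<lambda>_. borel) Xs {1..}"
  and Xs_meas: "\<And>n. n \<ge> 1 \<Longrightarrow> Xs n \<in> borel_measurable M"
  and Xs_law: "\<And>n. n \<ge> 1 \<Longrightarrow> distr M borel (Xs n) = distr M borel X"
begin

lemma law_PiM:
  fixes n :: nat
  assumes n: "n \<ge> 1" and ind: "indep_vars (\<lambda>_. borel) Y {1..n}"
    and meas: "\<And>i. i \<in> {1..n} \<Longrightarrow> Y i \<in> borel_measurable M"
    and law: "\<And>i. i \<in> {1..n} \<Longrightarrow> distr M borel (Y i) = distr M borel X"
  shows "distr M (\<Pi>\<^sub>M i\<in>{1..n}. borel) (\<lambda>\<omega>. \<lambda>i\<in>{1..n}. Y i \<omega>) = (\<Pi>\<^sub>M i\<in>{1..n}. distr M borel X)"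
proof -
  have "distr M (\<Pi>\<^sub>M i\<in>{1..n}. borel) (\<lambda>\<omega>. \<lambda>i\<in>{1..n}. Y i \<omega>) = (\<Pi>\<^sub>M i\<in>{1..n}. distr M borel (Y i))"
  proof -
    have ne: "{1..n} \<noteq> {}" using n by simp
    show ?thesis
      using iffD1[OF indep_vars_iff_distr_eq_PiM'[where I="{1..n}" and M'="\<lambda>_. borel" and X=Y, OF ne meas] ind] .
  qed
  also have "\<dots> = (\<Pi>\<^sub>M i\<in>{1..n}. distr M borel X)"
    by (intro PiM_cong) (auto simp: law)
  finally show ?thesis .
qed

lemma neg_law: assumes "i \<ge> 1" shows "distr M borel (\<lambda>\<omega>. - Xs i \<omega>) = distr M borel X"
proof -
  have [measurable]: "Xs i \<in> borel_measurable M" using Xs_meas assms by auto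
  have "distr M borel (\<lambda>\<omega>. - Xs i \<omega>) = distr (distr M borel (Xs i)) borel uminus"
    by (subst distr_distr) (auto simp: comp_def)
  also have "\<dots> = distr (distr M borel X) borel uminus" using Xs_law assms by simp
  also have "\<dots> = distr M borel (\<lambda>\<omega>. - X \<omega>)"
    by (subst distr_distr) (auto simp: comp_def)
  finally show ?thesis using symmX by simp
qed

definition flipv :: "nat \<Rightarrow> nat \<Rightarrow> 'a \<Rightarrow> nat \<Rightarrow> real" where
  "flipv n k \<omega> = (\<lambda>i\<in>{1..n}. if i \<le> k then Xs i \<omega> else - Xs i \<omega>)"

definition vecv :: "nat \<Rightarrow> 'a \<Rightarrow> nat \<Rightarrow> real" where
  "vecv n \<omega> = (\<lambda>i\<in>{1..n}. Xs i \<omega>)"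

lemma same_law:
  assumes n: "n \<ge> 1"
  shows "distr M (\<Pi>\<^sub>M i\<in>{1..n}. borel) (vecv n) = distr M (\<Pi>\<^sub>M i\<in>{1..n}. borel) (flipv n k)"
proof -
  have ind: "indep_vars (\<lambda>_. borel) Xs {1..n}"
    by (rule indep_vars_subset[OF indep]) auto
  have ind2: "indep_vars (\<lambda>_. borel) (\<lambda>i \<omega>. if i \<le> k then Xs i \<omega> else - Xs i \<omega>) {1..n}"
    using indep_vars_compose2[OF ind, of "\<lambda>i y. if i \<le> k then y else - y" "\<lambda>_. borel"] by auto
  have "distr M (\<Pi>\<^sub>M i\<in>{1..n}. borel) (vecv n) = (\<Pi>\<^sub>M i\<in>{1..n}. distr M borel X)"
    unfolding vecv_def by (rule law_PiM[OF n ind]) (auto simp: Xs_meas Xs_law)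
  moreover have "distr M (\<Pi>\<^sub>M i\<in>{1..n}. borel) (flipv n k) = (\<Pi>\<^sub>M i\<in>{1..n}. distr M borel X)"
    unfolding flipv_def
  proof (rule law_PiM[OF n ind2])
    fix i assume i: "i \<in> {1..n}"
    then have [measurable]: "Xs i \<in> borel_measurable M" using Xs_meas by auto
    show "(\<lambda>\<omega>. if i \<le> k then Xs i \<omega> else - Xs i \<omega>) \<in> borel_measurable M" by auto
    show "distr M borel (\<lambda>\<omega>. if i \<le> k then Xs i \<omega> else - Xs i \<omega>) = distr M borel X"
      using i by (cases "i \<le> k") (auto simp: Xs_law neg_law)
  qed
  ultimately show ?thesis by simp
qed

lemma vecv_meas[measurable]: "vecv n \<in> measurable M (\<Pi>\<^sub>M i\<in>{1..n}. borel)"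
  unfolding vecv_def by (rule measurable_restrict) (auto intro: Xs_meas)

lemma flipv_meas[measurable]: "flipv n k \<in> measurable M (\<Pi>\<^sub>M i\<in>{1..n}. borel)"
  unfolding flipv_def
proof (rule measurable_restrict)
  fix i assume "i \<in> {1..n}"
  then have [measurable]: "Xs i \<in> borel_measurable M" using Xs_meas by auto
  show "(\<lambda>\<omega>. if i \<le> k then Xs i \<omega> else - Xs i \<omega>) \<in> borel_measurable M" by auto
qed

lemma sum_split: fixes x :: "nat \<Rightarrow> real" assumes "k \<le> n"
  shows "(\<Sum>i\<in>{1..n}. x i) = (\<Sum>i\<in>{1..k}. x i) + (\<Sum>i\<in>{Suc k..n}. x i)"
proof -
  have "{1..n} = {1..k} \<union> {Suc k..n}" using assms by auto
  then show ?thesis by (simp add: sum.union_disjoint)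
qed

lemma sumF_meas: "(\<lambda>x. \<Sum>i\<in>{1..n}. x i) \<in> borel_measurable (\<Pi>\<^sub>M i\<in>{1..n}. (borel :: real measure))"
  by (rule borel_measurable_sum) (auto intro: measurable_component_singleton)

lemma key:
  fixes n k :: nat and t :: real and A :: "(nat \<Rightarrow> real) set"
  assumes n: "1 \<le> n" and kn: "k \<le> n"
    and A: "A \<in> sets (\<Pi>\<^sub>M i\<in>{1..n}. borel)"
    and inv: "\<And>\<omega>. \<omega> \<in> space M \<Longrightarrow> flipv n k \<omega> \<in> A \<longleftrightarrow> vecv n \<omega> \<in> A"
    and Asum: "\<And>x. x \<in> A \<Longrightarrow> t \<le> \<bar>\<Sum>i\<in>{1..k}. x i\<bar>"
  shows "prob {\<omega>\<in>space M. vecv n \<omega> \<in> A} \<le> 2 * prob {\<omega>\<in>space M. vecv n \<omega> \<in> A \<and> t \<le> \<bar>psum Xs n \<omega>\<bar>}"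
proof -
  let ?P = "\<Pi>\<^sub>M i\<in>{1..n}. (borel :: real measure)"
  define F where "F = {x \<in> space ?P. t \<le> \<bar>\<Sum>i\<in>{1..n}. x i\<bar>}"
  have F: "F \<in> sets ?P" unfolding F_def using sumF_meas[of n] by measurable
  have AF: "A \<inter> F \<in> sets ?P" using A F by auto
  have eqV: "{\<omega>\<in>space M. vecv n \<omega> \<in> A \<and> t \<le> \<bar>psum Xs n \<omega>\<bar>} = vecv n -` (A \<inter> F) \<inter> space M"
    using measurable_space[OF vecv_meas]
    by (auto simp: F_def psum_def vecv_def)
  have "prob (vecv n -` (A \<inter> F) \<inter> space M) = measure (distr M ?P (vecv n)) (A \<inter> F)"
    by (rule measure_distr[symmetric, OF vecv_meas AF])
  also have "\<dots> = measure (distr M ?P (flipv n k)) (A \<inter> F)" using same_law[OF n] by simp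
  also have "\<dots> = prob (flipv n k -` (A \<inter> F) \<inter> space M)"
    by (rule measure_distr[OF flipv_meas AF])
  finally have eqW: "prob (vecv n -` (A \<inter> F) \<inter> space M) = prob (flipv n k -` (A \<inter> F) \<inter> space M)" .
  have sub: "{\<omega>\<in>space M. vecv n \<omega> \<in> A} \<subseteq> (vecv n -` (A \<inter> F) \<inter> space M) \<union> (flipv n k -` (A \<inter> F) \<inter> space M)"
  proof
    fix \<omega> assume w: "\<omega> \<in> {\<omega>\<in>space M. vecv n \<omega> \<in> A}"
    then have wA: "vecv n \<omega> \<in> A" "flipv n k \<omega> \<in> A" "\<omega> \<in> space M" using inv by auto
    define a where "a = (\<Sum>i\<in>{1..k}. Xs i \<omega>)"
    define r where "r = (\<Sum>i\<in>{Suc k..n}. Xs i \<omega>)"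
    have "(\<Sum>i\<in>{1..k}. vecv n \<omega> i) = a" unfolding a_def vecv_def using kn by (intro sum.cong) auto
    then have ta: "t \<le> \<bar>a\<bar>" using Asum[OF wA(1)] by simp
    have sV: "(\<Sum>i\<in>{1..n}. vecv n \<omega> i) = a + r"
      unfolding sum_split[OF kn] a_def r_def vecv_def using kn by (auto intro!: arg_cong2[where f="(+)"] sum.cong)
    have sW: "(\<Sum>i\<in>{1..n}. flipv n k \<omega> i) = a - r"
      unfolding sum_split[OF kn] a_def r_def flipv_def using kn
      by (auto simp: sum_negf[symmetric] intro!: arg_cong2[where f="(+)"] sum.cong)
    have "t \<le> \<bar>a + r\<bar> \<or> t \<le> \<bar>a - r\<bar>" using ta by linarith
    then show "\<omega> \<in> (vecv n -` (A \<inter> F) \<inter> space M) \<union> (flipv n k -` (A \<inter> F) \<inter> space M)"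
      using wA sV sW measurable_space[OF vecv_meas wA(3)] measurable_space[OF flipv_meas wA(3)]
      by (auto simp: F_def)
  qed
  have "prob {\<omega>\<in>space M. vecv n \<omega> \<in> A} \<le> prob ((vecv n -` (A \<inter> F) \<inter> space M) \<union> (flipv n k -` (A \<inter> F) \<inter> space M))"
    using measurable_sets[OF vecv_meas AF] measurable_sets[OF flipv_meas AF]
    by (intro finite_measure_mono[OF sub] sets.Un)
  also have "\<dots> \<le> prob (vecv n -` (A \<inter> F) \<inter> space M) + prob (flipv n k -` (A \<inter> F) \<inter> space M)"
    using measurable_sets[OF vecv_meas AF] measurable_sets[OF flipv_meas AF]
    by (intro measure_subadditive) auto
  also have "\<dots> = 2 * prob {\<omega>\<in>space M. vecv n \<omega> \<in> A \<and> t \<le> \<bar>psum Xs n \<omega>\<bar>}"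
    using eqW eqV by simp
  finally show ?thesis .
qed

lemma psum_meas[measurable]: "psum Xs n \<in> borel_measurable M"
proof -
  have "(\<lambda>\<omega>. \<Sum>i\<in>{1..n}. Xs i \<omega>) \<in> borel_measurable M"
    by (rule borel_measurable_sum) (auto intro: Xs_meas)
  then show ?thesis unfolding psum_def[abs_def] .
qed

definition Bn :: "nat \<Rightarrow> 'a set" where
  "Bn n = {\<omega>\<in>space M. 1/8 \<le> \<bar>psum Xs n \<omega> / real n\<bar>}"
definition An :: "nat \<Rightarrow> 'a set" where
  "An n = {\<omega>\<in>space M. 1 \<le> \<bar>psum Xs n \<omega> / real n\<bar>}"
definition En :: "nat \<Rightarrow> nat \<Rightarrow> 'a set" where
  "En j k = {\<omega>\<in>space M. j \<le> k \<and> 1 \<le> \<bar>psum Xs k \<omega> / real k\<bar> \<and> (\<forall>i\<in>{j..<k}. \<bar>psum Xs i \<omega> / real i\<bar> < 1)}"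

lemma Bn_sets[measurable]: "Bn n \<in> sets M" unfolding Bn_def by measurable
lemma An_sets[measurable]: "An n \<in> sets M" unfolding An_def by measurable
lemma En_sets[measurable]: "En j k \<in> sets M" unfolding En_def by measurable

lemma sumPi_meas: fixes m n :: nat assumes "m \<le> n"
  shows "(\<lambda>x. \<Sum>i\<in>{1..m}. x i) \<in> borel_measurable (\<Pi>\<^sub>M i\<in>{1..n}. (borel :: real measure))"
  using assms by (intro borel_measurable_sum measurable_component_singleton) auto


lemma step_real:
  assumes j: "1 \<le> j" and jk: "j \<le> k" and n: "n \<in> {k..2*k}"
  shows "prob (En j k) \<le> 2 * prob (En j k \<inter> Bn n)"
proof -
  have k1: "1 \<le> k" and n1: "1 \<le> n" and kn: "k \<le> n" using j jk n by auto
  let ?P = "\<Pi>\<^sub>M i\<in>{1..n}. (borel :: real measure)"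
  define A where "A = {x \<in> space ?P. j \<le> k \<and> 1 \<le> \<bar>(\<Sum>i\<in>{1..k}. x i) / real k\<bar> \<and>
     (\<forall>i\<in>{j..<k}. \<bar>(\<Sum>i'\<in>{1..i}. x i') / real i\<bar> < 1)}"
  have A: "A \<in> sets ?P"
  proof -
    have m2: "{x \<in> space ?P. 1 \<le> \<bar>(\<Sum>i\<in>{1..k}. x i) / real k\<bar>} \<in> sets ?P"
      using sumPi_meas[OF kn] by (intro borel_measurable_le borel_measurable_abs borel_measurable_divide) auto
    have m3: "{x \<in> space ?P. \<forall>i\<in>{j..<k}. \<bar>(\<Sum>i'\<in>{1..i}. x i') / real i\<bar> < 1} \<in> sets ?P"
    proof (rule sets.sets_Collect_finite_All)
      fix i assume "i \<in> {j..<k}"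
      then have "i \<le> n" using kn by auto
      note sumPi_meas[OF this]
      then show "{x \<in> space ?P. \<bar>(\<Sum>i'\<in>{1..i}. x i') / real i\<bar> < 1} \<in> sets ?P"
        by (intro borel_measurable_less borel_measurable_abs borel_measurable_divide) auto
    qed simp
    have "A = {x \<in> space ?P. 1 \<le> \<bar>(\<Sum>i\<in>{1..k}. x i) / real k\<bar>} \<inter> {x \<in> space ?P. \<forall>i\<in>{j..<k}. \<bar>(\<Sum>i'\<in>{1..i}. x i') / real i\<bar> < 1}"
      unfolding A_def using jk by blast
    moreover have "{x \<in> space ?P. 1 \<le> \<bar>(\<Sum>i\<in>{1..k}. x i) / real k\<bar>} \<inter> {x \<in> space ?P. \<forall>i\<in>{j..<k}. \<bar>(\<Sum>i'\<in>{1..i}. x i') / real i\<bar> < 1} \<in> sets ?P"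
      using m2 m3 by (rule sets.Int)
    ultimately show ?thesis by (simp only:)
  qed
  have vsum: "(\<Sum>i'\<in>{1..i}. vecv n \<omega> i') = psum Xs i \<omega>" if "i \<le> n" for i \<omega>
    unfolding vecv_def psum_def using that by (intro sum.cong) auto
  have fsum: "(\<Sum>i'\<in>{1..i}. flipv n k \<omega> i') = psum Xs i \<omega>" if "i \<le> k" for i \<omega>
    unfolding flipv_def psum_def using that kn by (intro sum.cong) auto
  have vspace: "vecv n \<omega> \<in> space ?P" "flipv n k \<omega> \<in> space ?P" if "\<omega> \<in> space M" for \<omega>
    using measurable_space[OF vecv_meas that] measurable_space[OF flipv_meas that] by simp_all
  have EA: "{\<omega>\<in>space M. vecv n \<omega> \<in> A} = En j k"
  proof (intro set_eqI iffI)
    fix \<omega> assume "\<omega> \<in> {\<omega>\<in>space M. vecv n \<omega> \<in> A}"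
    then have w: "\<omega> \<in> space M" "vecv n \<omega> \<in> A" by auto
    have s1: "(\<Sum>i\<in>{1..k}. vecv n \<omega> i) = psum Xs k \<omega>" by (rule vsum[OF kn])
    have s2: "\<forall>i\<in>{j..<k}. (\<Sum>i'\<in>{1..i}. vecv n \<omega> i') = psum Xs i \<omega>" using vsum kn by auto
    show "\<omega> \<in> En j k" using w(2) unfolding A_def En_def mem_Collect_eq s1 using s2 w(1) by auto
  next
    fix \<omega> assume w: "\<omega> \<in> En j k"
    then have w1: "\<omega> \<in> space M" unfolding En_def by auto
    have s1: "(\<Sum>i\<in>{1..k}. vecv n \<omega> i) = psum Xs k \<omega>" by (rule vsum[OF kn])
    have s2: "\<forall>i\<in>{j..<k}. (\<Sum>i'\<in>{1..i}. vecv n \<omega> i') = psum Xs i \<omega>" using vsum kn by auto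
    show "\<omega> \<in> {\<omega>\<in>space M. vecv n \<omega> \<in> A}" using w unfolding A_def En_def mem_Collect_eq s1 using s2 w1 vspace(1)[OF w1] by auto
  qed
  have key1: "prob {\<omega>\<in>space M. vecv n \<omega> \<in> A} \<le> 2 * prob {\<omega>\<in>space M. vecv n \<omega> \<in> A \<and> real k \<le> \<bar>psum Xs n \<omega>\<bar>}"
  proof (rule key[OF n1 kn A])
    fix \<omega> assume "\<omega> \<in> space M"
    then have w1: "\<omega> \<in> space M" .
    have s1: "(\<Sum>i\<in>{1..k}. vecv n \<omega> i) = psum Xs k \<omega>" by (rule vsum[OF kn])
    have s2: "\<forall>i\<in>{j..<k}. (\<Sum>i'\<in>{1..i}. vecv n \<omega> i') = psum Xs i \<omega>" using vsum kn by auto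
    have t1: "(\<Sum>i\<in>{1..k}. flipv n k \<omega> i) = psum Xs k \<omega>" by (rule fsum) simp
    have t2: "\<forall>i\<in>{j..<k}. (\<Sum>i'\<in>{1..i}. flipv n k \<omega> i') = psum Xs i \<omega>" using fsum by auto
    show "flipv n k \<omega> \<in> A \<longleftrightarrow> vecv n \<omega> \<in> A"
      unfolding A_def mem_Collect_eq s1 t1 using s2 t2 vspace[OF w1] by auto
  next
    fix x assume "x \<in> A"
    then have "1 \<le> \<bar>(\<Sum>i\<in>{1..k}. x i) / real k\<bar>" unfolding A_def by auto
    then show "real k \<le> \<bar>\<Sum>i\<in>{1..k}. x i\<bar>" using k1 by (auto simp: abs_divide le_divide_eq_1)
  qed
  have sub: "{\<omega>\<in>space M. vecv n \<omega> \<in> A \<and> real k \<le> \<bar>psum Xs n \<omega>\<bar>} \<subseteq> En j k \<inter> Bn n"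
  proof
    fix \<omega> assume w: "\<omega> \<in> {\<omega>\<in>space M. vecv n \<omega> \<in> A \<and> real k \<le> \<bar>psum Xs n \<omega>\<bar>}"
    have "real n \<le> 8 * real k" using n by auto
    then have "1/8 \<le> \<bar>psum Xs n \<omega>\<bar> / real n" using w n1 by (simp add: field_simps)
    then show "\<omega> \<in> En j k \<inter> Bn n" using w EA unfolding Bn_def by (auto simp: abs_div_pos)
  qed
  have "prob {\<omega>\<in>space M. vecv n \<omega> \<in> A \<and> real k \<le> \<bar>psum Xs n \<omega>\<bar>} \<le> prob (En j k \<inter> Bn n)"
    using En_sets Bn_sets by (intro finite_measure_mono[OF sub] sets.Int)
  then show ?thesis using key1 EA by simp
qed


lemma step_real2:
  assumes j: "1 \<le> j" and jk: "j \<le> k"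
  shows "prob (En j k) \<le> (\<Sum>n\<in>{k..2*k}. 4 / real n * prob (En j k \<inter> Bn n))"
proof -
  have k1: "1 \<le> k" using j jk by auto
  have c: "card {k..2*k} = k + 1" by simp
  have "prob (En j k) = (\<Sum>n\<in>{k..2*k}. prob (En j k) / real (k+1))"
    using c by simp
  also have "\<dots> \<le> (\<Sum>n\<in>{k..2*k}. 4 / real n * prob (En j k \<inter> Bn n))"
  proof (rule sum_mono)
    fix n assume n: "n \<in> {k..2*k}"
    have "prob (En j k) / real (k+1) \<le> 2 * prob (En j k \<inter> Bn n) / real (k+1)"
      using step_real[OF j jk n] by (simp add: divide_right_mono)
    also have "\<dots> \<le> 4 / real n * prob (En j k \<inter> Bn n)"
    proof -
      have h: "2 / real (k+1) \<le> 4 / real n" using n k1 by (simp add: field_simps)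
      show ?thesis using mult_right_mono[OF h measure_nonneg] by simp
    qed
    finally show "prob (En j k) / real (k+1) \<le> 4 / real n * prob (En j k \<inter> Bn n)" .
  qed
  finally show ?thesis .
qed



lemma En_disj: "disjoint_family (En j)"
proof (unfold disjoint_family_on_def, intro ballI impI)
  fix k k' :: nat assume "k \<noteq> k'"
  have *: "En j a \<inter> En j b = {}" if "a < b" for a b
  proof -
    { fix \<omega> assume "\<omega> \<in> En j a" "\<omega> \<in> En j b"
      then have "j \<le> a" "1 \<le> \<bar>psum Xs a \<omega> / real a\<bar>" "\<forall>i\<in>{j..<b}. \<bar>psum Xs i \<omega> / real i\<bar> < 1"
        unfolding En_def by auto
      then have False using that by force }
    then show ?thesis by blast
  qed
  show "En j k \<inter> En j k' = {}"
    using \<open>k \<noteq> k'\<close> *[of k k'] *[of k' k] by (cases "k < k'") auto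
qed

lemma En_Un: "(\<Union>k. En j k) = (\<Union>n\<in>{j..}. An n)"
proof (intro equalityI subsetI)
  fix \<omega> assume "\<omega> \<in> (\<Union>k. En j k)"
  then show "\<omega> \<in> (\<Union>n\<in>{j..}. An n)" unfolding En_def An_def by auto
next
  fix \<omega> assume "\<omega> \<in> (\<Union>n\<in>{j..}. An n)"
  then obtain n where n: "j \<le> n" "\<omega> \<in> An n" by auto
  define k where "k = (LEAST m. j \<le> m \<and> \<omega> \<in> An m)"
  have k: "j \<le> k \<and> \<omega> \<in> An k" unfolding k_def by (rule LeastI[of _ n]) (use n in auto)
  have less: "\<not> (j \<le> i \<and> \<omega> \<in> An i)" if "i < k" for i
    using not_less_Least[of i "\<lambda>m. j \<le> m \<and> \<omega> \<in> An m"] that unfolding k_def by auto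
  have less2: "\<bar>psum Xs i \<omega> / real i\<bar> < 1" if "i \<in> {j..<k}" for i
  proof -
    have "\<not> \<omega> \<in> An i" using less[of i] that by auto
    then show ?thesis using k unfolding An_def by auto
  qed
  have "\<omega> \<in> En j k" using k less2 unfolding En_def An_def by auto
  then show "\<omega> \<in> (\<Union>k. En j k)" by auto
qed

lemma En_bound:
  assumes j: "1 \<le> j"
  shows "emeasure M (En j k) \<le> (\<integral>\<^sup>+\<omega>. (\<Sum>n\<in>{k..2*k}. ennreal (4 / real n) * indicator (En j k \<inter> Bn n) \<omega>) \<partial>M)"
proof (cases "j \<le> k")
  case False
  then have "En j k = {}" unfolding En_def by auto
  then show ?thesis by simp
next
  case True
  have "emeasure M (En j k) = ennreal (prob (En j k))" by (simp add: emeasure_eq_measure)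
  also have "\<dots> \<le> ennreal (\<Sum>n\<in>{k..2*k}. 4 / real n * prob (En j k \<inter> Bn n))"
    using step_real2[OF j True] by (rule ennreal_leI)
  also have "\<dots> = (\<Sum>n\<in>{k..2*k}. ennreal (4 / real n) * emeasure M (En j k \<inter> Bn n))"
  proof -
    have "(\<Sum>n\<in>{k..2*k}. ennreal (4 / real n) * emeasure M (En j k \<inter> Bn n))
        = (\<Sum>n\<in>{k..2*k}. ennreal (4 / real n * prob (En j k \<inter> Bn n)))"
      by (intro sum.cong refl) (simp add: emeasure_eq_measure ennreal_mult'[symmetric])
    also have "\<dots> = ennreal (\<Sum>n\<in>{k..2*k}. 4 / real n * prob (En j k \<inter> Bn n))"
      by (rule sum_ennreal) simp
    finally show ?thesis by simp
  qed
  also have "\<dots> = (\<integral>\<^sup>+\<omega>. (\<Sum>n\<in>{k..2*k}. ennreal (4 / real n) * indicator (En j k \<inter> Bn n) \<omega>) \<partial>M)"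
    by (subst nn_integral_sum) (auto simp: nn_integral_cmult_indicator)
  finally show ?thesis .
qed

lemma pointwise:
  assumes j: "1 \<le> j"
  shows "(\<Sum>k. \<Sum>n\<in>{k..2*k}. ennreal (4 / real n) * indicator (En j k \<inter> Bn n) \<omega>)
     \<le> (\<Sum>n. if j \<le> n then ennreal (4 / real n) * indicator (Bn n) \<omega> else 0)"
proof (cases "\<exists>k. \<omega> \<in> En j k")
  case False
  then show ?thesis by (simp add: indicator_def)
next
  case True
  then obtain k0 where k0: "\<omega> \<in> En j k0" by auto
  have other: "\<omega> \<notin> En j k" if "k \<noteq> k0" for k
    using En_disj[of j] that k0 unfolding disjoint_family_on_def by blast
  have jk: "j \<le> k0" using k0 unfolding En_def by auto
  have "(\<Sum>k. \<Sum>n\<in>{k..2*k}. ennreal (4 / real n) * indicator (En j k \<inter> Bn n) \<omega>)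
      = (\<Sum>k\<in>{k0}. \<Sum>n\<in>{k..2*k}. ennreal (4 / real n) * indicator (En j k \<inter> Bn n) \<omega>)"
    by (rule suminf_finite) (use other in \<open>auto simp: indicator_def\<close>)
  also have "\<dots> = (\<Sum>n\<in>{k0..2*k0}. if j \<le> n then ennreal (4 / real n) * indicator (Bn n) \<omega> else 0)"
    using k0 jk by (auto intro!: sum.cong simp: indicator_def)
  also have "\<dots> \<le> (\<Sum>n. if j \<le> n then ennreal (4 / real n) * indicator (Bn n) \<omega> else 0)"
    by (rule sum_le_suminf[OF summableI]) auto
  finally show ?thesis .
qed

lemma tail:
  assumes j: "1 \<le> j"
  shows "emeasure M (\<Union>n\<in>{j..}. An n) \<le> (\<Sum>n. if j \<le> n then ennreal (4 / real n) * emeasure M (Bn n) else 0)"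
proof -
  have "emeasure M (\<Union>n\<in>{j..}. An n) = emeasure M (\<Union>k. En j k)" by (simp add: En_Un)
  also have "\<dots> = (\<Sum>k. emeasure M (En j k))"
    by (rule suminf_emeasure[symmetric]) (auto simp: En_disj)
  also have "\<dots> \<le> (\<Sum>k. \<integral>\<^sup>+\<omega>. (\<Sum>n\<in>{k..2*k}. ennreal (4 / real n) * indicator (En j k \<inter> Bn n) \<omega>) \<partial>M)"
    by (rule suminf_le[OF _ summableI summableI]) (rule En_bound[OF j])
  also have "\<dots> = (\<integral>\<^sup>+\<omega>. (\<Sum>k. \<Sum>n\<in>{k..2*k}. ennreal (4 / real n) * indicator (En j k \<inter> Bn n) \<omega>) \<partial>M)"
    by (rule nn_integral_suminf[symmetric]) measurable
  also have "\<dots> \<le> (\<integral>\<^sup>+\<omega>. (\<Sum>n. if j \<le> n then ennreal (4 / real n) * indicator (Bn n) \<omega> else 0) \<partial>M)"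
    by (rule nn_integral_mono) (rule pointwise[OF j])
  also have "\<dots> = (\<Sum>n. \<integral>\<^sup>+\<omega>. (if j \<le> n then ennreal (4 / real n) * indicator (Bn n) \<omega> else 0) \<partial>M)"
    by (rule nn_integral_suminf) measurable
  also have "\<dots> = (\<Sum>n. if j \<le> n then ennreal (4 / real n) * emeasure M (Bn n) else 0)"
    by (intro suminf_cong) (auto simp: nn_integral_cmult_indicator)
  finally show ?thesis .
qed

lemma swap_suminf: fixes f :: "nat \<Rightarrow> nat \<Rightarrow> ennreal"
  shows "(\<Sum>i. \<Sum>j. f i j) = (\<Sum>j. \<Sum>i. f i j)"
proof -
  have "(\<Sum>i. \<Sum>j. f i j) = (\<Sum>i. \<integral>\<^sup>+j. f i j \<partial>count_space UNIV)"
    by (simp add: nn_integral_count_space_nat)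
  also have "\<dots> = (\<integral>\<^sup>+j. (\<Sum>i. f i j) \<partial>count_space UNIV)"
    by (rule nn_integral_suminf[symmetric]) simp
  also have "\<dots> = (\<Sum>j. \<Sum>i. f i j)" by (simp add: nn_integral_count_space_nat)
  finally show ?thesis .
qed

lemma U_sets[measurable]: "(\<Union>n\<in>{j..}. An n) \<in> sets M"
  by (intro sets.countable_UN) auto

lemma main:
  assumes G: "mono_on {0..} G"
  shows "(\<integral>\<^sup>+ \<omega>. G_ext G (last_exit Xs \<omega>) \<partial>M)
     \<le> G 0 + 12 * (\<Sum>n. ennreal (1 / real (Suc n)) * G (real (Suc n))
            * ennreal (measure M {\<omega> \<in> space M. \<bar>psum Xs (Suc n) \<omega> / real (Suc n)\<bar> \<ge> 1/8}))"
proof -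
  define d where "d j = G (real (Suc j)) - G (real j)" for j
  define U where "U j = (\<Union>n\<in>{Suc j..}. An n)" for j
  define c where "c n = ennreal (4 / real n) * emeasure M (Bn n)" for n
  have Gmono: "G (real a) \<le> G (real b)" if "a \<le> b" for a b
    using G that by (auto intro: mono_onD)
  have Gsum: "G (real m) = G 0 + (\<Sum>j<m. d j)" for m
  proof (induction m)
    case 0 then show ?case by simp
  next
    case (Suc m)
    have "G (real (Suc m)) = G (real m) + d m"
      unfolding d_def by (rule add_diff_inverse_ennreal[symmetric]) (rule Gmono, simp)
    then show ?case using Suc by (simp add: add.assoc)
  qed
  have pt: "G_ext G (last_exit Xs \<omega>) \<le> G 0 + (\<Sum>j. d j * indicator (U j) \<omega>)" if w: "\<omega> \<in> space M" for \<omega>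
  proof -
    let ?R = "G 0 + (\<Sum>j. d j * indicator (U j) \<omega>)"
    have bnd: "G (real m) \<le> ?R" if m: "enat m \<le> last_exit Xs \<omega>" for m
    proof -
      have inU: "\<omega> \<in> U j" if "j < m" for j
      proof -
        have "enat j < last_exit Xs \<omega>" using m that by (meson enat_ord_simps(2) less_le_trans)
        then have "enat j < Sup ({0} \<union> {enat n | n. n \<ge> 1 \<and> \<bar>psum Xs n \<omega> / real n\<bar> \<ge> 1})"
          unfolding last_exit_def .
        then have "\<exists>s\<in>{0} \<union> {enat n | n. n \<ge> 1 \<and> \<bar>psum Xs n \<omega> / real n\<bar> \<ge> 1}. enat j < s"
          by (simp only: less_Sup_iff)
        then obtain s where s: "s \<in> {0} \<union> {enat n | n. n \<ge> 1 \<and> \<bar>psum Xs n \<omega> / real n\<bar> \<ge> 1}" "enat j < s"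
          by blast
        then obtain n where n: "s = enat n" "n \<ge> 1" "\<bar>psum Xs n \<omega> / real n\<bar> \<ge> 1" by auto
        then have "j < n" using s by simp
        then show ?thesis using n w unfolding U_def An_def by auto
      qed
      have "G (real m) = G 0 + (\<Sum>j<m. d j * indicator (U j) \<omega>)"
        using Gsum[of m] inU by simp
      also have "\<dots> \<le> ?R"
        by (intro add_left_mono sum_le_suminf[OF summableI]) auto
      finally show ?thesis .
    qed
    show ?thesis
    proof (cases "last_exit Xs \<omega>")
      case (enat m)
      then show ?thesis using bnd[of m] by (simp add: G_ext_def)
    next
      case infinity
      then show ?thesis using bnd by (simp add: G_ext_def SUP_least)
    qed
  qed
  have "(\<integral>\<^sup>+ \<omega>. G_ext G (last_exit Xs \<omega>) \<partial>M) \<le> (\<integral>\<^sup>+ \<omega>. G 0 + (\<Sum>j. d j * indicator (U j) \<omega>) \<partial>M)"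
    by (rule nn_integral_mono) (rule pt)
  also have "\<dots> = (\<integral>\<^sup>+ \<omega>. G 0 \<partial>M) + (\<integral>\<^sup>+ \<omega>. (\<Sum>j. d j * indicator (U j) \<omega>) \<partial>M)"
    by (rule nn_integral_add) (auto simp: U_def)
  also have "\<dots> = G 0 + (\<Sum>j. d j * emeasure M (U j))"
    by (subst nn_integral_suminf) (auto simp: U_def nn_integral_cmult_indicator emeasure_space_1)
  also have "(\<Sum>j. d j * emeasure M (U j)) \<le> (\<Sum>j. d j * (\<Sum>n. if Suc j \<le> n then c n else 0))"
  proof (rule suminf_le[OF _ summableI summableI])
    fix j
    show "d j * emeasure M (U j) \<le> d j * (\<Sum>n. if Suc j \<le> n then c n else 0)"
      unfolding U_def c_def by (rule mult_left_mono[OF tail]) auto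
  qed
  also have "\<dots> = (\<Sum>j. \<Sum>n. if j < n then d j * c n else 0)"
    proof (intro suminf_cong)
    fix j
    have "d j * (\<Sum>n. if Suc j \<le> n then c n else 0) = (\<Sum>n. d j * (if Suc j \<le> n then c n else 0))"
      by (rule ennreal_suminf_cmult[symmetric])
    also have "\<dots> = (\<Sum>n. if j < n then d j * c n else 0)"
      by (intro suminf_cong) simp
    finally show "d j * (\<Sum>n. if Suc j \<le> n then c n else 0) = (\<Sum>n. if j < n then d j * c n else 0)" .
  qed
  also have "\<dots> = (\<Sum>n. \<Sum>j. if j < n then d j * c n else 0)" by (rule swap_suminf)
  also have "\<dots> = (\<Sum>n. (\<Sum>j<n. d j) * c n)"
  proof (intro suminf_cong)
    fix n
    have "(\<Sum>j. if j < n then d j * c n else 0) = (\<Sum>j<n. if j < n then d j * c n else 0)"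
      by (rule suminf_finite) auto
    then show "(\<Sum>j. if j < n then d j * c n else 0) = (\<Sum>j<n. d j) * c n"
      by (simp add: sum_distrib_right)
  qed
  also have "\<dots> \<le> (\<Sum>n. G (real n) * c n)"
  proof (intro suminf_le[OF _ summableI summableI] mult_right_mono)
    fix n show "(\<Sum>j<n. d j) \<le> G (real n)" using Gsum[of n] by (simp add: add_increasing)
  qed auto
  also have "\<dots> = (\<Sum>n. G (real (Suc n)) * c (Suc n))"
  proof -
    have z: "G (real 0) * c 0 = 0" unfolding c_def by simp
    have "(\<lambda>n. G (real n) * c n) sums ((\<Sum>n. G (real (Suc n)) * c (Suc n)) + G (real 0) * c 0)"
      by (rule sums_Suc[where f="\<lambda>n. G (real n) * c n"]) (rule summable_sums[OF summableI])
    then have "(\<lambda>n. G (real n) * c n) sums (\<Sum>n. G (real (Suc n)) * c (Suc n))" by (simp only: z add_0_right)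
    then show ?thesis by (simp add: sums_iff)
  qed
  also have "\<dots> = 4 * (\<Sum>n. ennreal (1 / real (Suc n)) * G (real (Suc n))
            * ennreal (measure M {\<omega> \<in> space M. \<bar>psum Xs (Suc n) \<omega> / real (Suc n)\<bar> \<ge> 1/8}))"
  proof -
    have "G (real (Suc n)) * c (Suc n) = 4 * (ennreal (1 / real (Suc n)) * G (real (Suc n))
            * ennreal (measure M {\<omega> \<in> space M. \<bar>psum Xs (Suc n) \<omega> / real (Suc n)\<bar> \<ge> 1/8}))" for n
    proof -
      have "ennreal (4 / real (Suc n)) = 4 * ennreal (1 / real (Suc n))"
      proof -
        have "ennreal (4 * (1 / real (Suc n))) = ennreal 4 * ennreal (1 / real (Suc n))"
          by (rule ennreal_mult) auto
        then show ?thesis by simp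
      qed
      have "c (Suc n) = 4 * ennreal (1 / real (Suc n)) * ennreal (measure M {\<omega> \<in> space M. \<bar>psum Xs (Suc n) \<omega> / real (Suc n)\<bar> \<ge> 1/8})"
        unfolding c_def Bn_def by (simp only: emeasure_eq_measure \<open>ennreal (4 / real (Suc n)) = 4 * ennreal (1 / real (Suc n))\<close>)
      then show ?thesis by (simp only: mult_ac)
    qed
    then show ?thesis by simp
  qed
  finally have "(\<integral>\<^sup>+ \<omega>. G_ext G (last_exit Xs \<omega>) \<partial>M) \<le> G 0 + 4 * (\<Sum>n. ennreal (1 / real (Suc n)) * G (real (Suc n))
            * ennreal (measure M {\<omega> \<in> space M. \<bar>psum Xs (Suc n) \<omega> / real (Suc n)\<bar> \<ge> 1/8}))"
    by (simp add: add_left_mono)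
  also have "\<dots> \<le> G 0 + 12 * (\<Sum>n. ennreal (1 / real (Suc n)) * G (real (Suc n))
            * ennreal (measure M {\<omega> \<in> space M. \<bar>psum Xs (Suc n) \<omega> / real (Suc n)\<bar> \<ge> 1/8}))"
    by (intro add_left_mono mult_right_mono) auto
  finally show ?thesis .
qed

end

theorem proposition3:
  fixes M :: "'a measure" and X :: "'a \<Rightarrow> real" and Xs :: "nat \<Rightarrow> 'a \<Rightarrow> real"
    and G :: "real \<Rightarrow> ennreal"
  assumes "prob_space M"
    and "mono_on {0..} G"
    and "X \<in> borel_measurable M"
    and "distr M borel (\<lambda>\<omega>. - X \<omega>) = distr M borel X"
    and "prob_space.indep_vars M (\<lambda>_. borel) Xs {1..}"
    and "\<And>n. n \<ge> 1 \<Longrightarrow> Xs n \<in> borel_measurable M"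
    and "\<And>n. n \<ge> 1 \<Longrightarrow> distr M borel (Xs n) = distr M borel X"
  shows "(\<integral>\<^sup>+ \<omega>. G_ext G (last_exit Xs \<omega>) \<partial>M)
     \<le> G 0 + 12 * (\<Sum>n. ennreal (1 / real (Suc n)) * G (real (Suc n))
            * ennreal (measure M {\<omega> \<in> space M. \<bar>psum Xs (Suc n) \<omega> / real (Suc n)\<bar> \<ge> 1/8}))"
proof -
  interpret symm M X Xs
    by (rule symm.intro[OF assms(1)], unfold_locales) (use assms in auto)
  show ?thesis by (rule main[OF assms(2)])
qed

end
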